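(* Let $G$ be a Hausdorff topological group, $(g_n)_{n\in\mathbb N}$ a sequence of pairwise distinct elements of $G$, and $A=\{g_1,g_2,\dots\}$. Consider: (ap1) $A$ is absolutely productive in $G$; (ap2) for every injection $\sigma:\mathbb N\to\mathbb N$ the sequence $(g_{\sigma(n)})_n$ is hyper-multipliable in $G$; (ap3) for every bijection $\sigma:\mathbb N\to\mathbb N$ the sequence $(g_{\sigma(n)})_n$ is hyper-multipliable in $G$; (ap4) $(g_n)_n$ is hyper-multipliable in $G$. Then (a) (ap1), (ap2), (ap3) are equivalent and imply (ap4); (b) if $G$ is abelian, then (ap1)–(ap4) are all equivalent.
   Context: $\prod_{k=1}^n a_k=a_1\cdots a_n$. A sequence $(g_n)$ in $G$ is hyper-multipliable if for every integer sequence $(m_n)$ the sequence $\left(\prod_{k=1}^n g_k^{m_k}\right)_n$ converges in $G$. A subset $A\subset G$ is absolutely productive in $G$ if every sequence of pairwise distinct elements of $A$ is hyper-multipliable in $G$. *)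

theory Defs
  imports "HOL-Analysis.Analysis"
begin

text \<open>Topological groups are written additively (class topological_group_add,
  built on the possibly non-commutative class group_add). The ordered product
  a_1 ... a_n becomes the ordered sum a_0 + ... + a_(n-1) (sequences indexed from 0),
  and g^m (m integer) becomes the integer multiple zmult m g.\<close>

definition zmult :: "int \<Rightarrow> 'a::group_add \<Rightarrow> 'a" where
  "zmult m g = (if 0 \<le> m then ((\<lambda>x. x + g) ^^ nat m) 0
                else - (((\<lambda>x. x + g) ^^ nat (- m)) 0))"

primrec oprod :: "(nat \<Rightarrow> 'a::monoid_add) \<Rightarrow> nat \<Rightarrow> 'a" where
  "oprod f 0 = 0"
| "oprod f (Suc n) = oprod f n + f n"

definition hyper_multipliable :: "(nat \<Rightarrow> 'a::{topological_group_add}) \<Rightarrow> bool" where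
  "hyper_multipliable g \<longleftrightarrow>
     (\<forall>m :: nat \<Rightarrow> int. convergent (\<lambda>n. oprod (\<lambda>k. zmult (m k) (g k)) n))"

definition absolutely_productive :: "'a::{topological_group_add} set \<Rightarrow> bool" where
  "absolutely_productive A \<longleftrightarrow>
     (\<forall>h :: nat \<Rightarrow> 'a. inj h \<and> range h \<subseteq> A \<longrightarrow> hyper_multipliable h)"

end

theory Submission
  imports Defs
begin

lemma zmult_0[simp]: "zmult 0 x = 0" by (simp add: zmult_def)

lemma oprod_gap:
  assumes "a \<le> b" "\<And>j. a \<le> j \<Longrightarrow> j < b \<Longrightarrow> f j = 0"
  shows "oprod f b = oprod f a"
  using assms by (induction b rule: dec_induct) auto

lemma oprod_sub:
  assumes r: "strict_mono r" and fr: "\<And>n. f (r n) = h n" and f0: "\<And>j. j \<notin> range r \<Longrightarrow> f j = 0"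
  shows "oprod f (r n) = oprod h n"
proof (induction n)
  case 0
  have "oprod f (r 0) = oprod f 0"
  proof (rule oprod_gap)
    fix j assume "j < r 0"
    moreover have "r 0 \<le> r i" for i using r by (simp add: strict_mono_less_eq)
    ultimately have "j \<notin> range r" by (metis imageE leD)
    then show "f j = 0" by (rule f0)
  qed simp
  then show ?case by simp
next
  case (Suc n)
  have lt: "r n < r (Suc n)" using r by (simp add: strict_mono_def)
  have "oprod f (r (Suc n)) = oprod f (Suc (r n))"
  proof (rule oprod_gap)
    fix j assume j: "Suc (r n) \<le> j" "j < r (Suc n)"
    have "j \<notin> range r"
    proof
      assume "j \<in> range r" then obtain i where i: "j = r i" by auto
      with j r have "r n < r i" "r i < r (Suc n)" by auto
      then have "n < i" "i < Suc n" using r by (auto simp: strict_mono_less)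
      then show False by simp
    qed
    then show "f j = 0" by (rule f0)
  qed (use lt in simp)
  also have "\<dots> = oprod h (Suc n)" using Suc fr by simp
  finally show ?case .
qed

lemma conv_sub:
  assumes "strict_mono r" "\<And>n. f (r n) = h n" "\<And>j. j \<notin> range r \<Longrightarrow> f j = 0"
    and "convergent (oprod f)"
  shows "convergent (oprod h)"
proof -
  from assms(4) obtain L where "oprod f \<longlonglongrightarrow> L" by (auto simp: convergent_def)
  then have "(oprod f \<circ> r) \<longlonglongrightarrow> L" using assms(1) by (rule LIMSEQ_subseq_LIMSEQ)
  moreover have "oprod f \<circ> r = oprod h" using oprod_sub[of r f h] assms(1-3) by auto
  ultimately show ?thesis by (auto simp: convergent_def)
qed

lemma ext_bij:
  fixes \<sigma> :: "nat \<Rightarrow> nat"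
  assumes "inj \<sigma>"
  shows "\<exists>\<tau> (r::nat\<Rightarrow>nat). bij \<tau> \<and> strict_mono r \<and> (\<forall>n. \<tau> (r n) = \<sigma> n)"
proof (cases "finite (UNIV - range \<sigma>)")
  case False
  define D where "D = UNIV - range \<sigma>"
  define e where "e = enumerate D"
  have e: "bij_betw e UNIV D" using False by (simp add: e_def D_def bij_enumerate)
  define \<tau> where "\<tau> n = (if even n then \<sigma> (n div 2) else e (n div 2))" for n
  have "inj \<tau>"
  proof (rule injI)
    fix x y assume eq: "\<tau> x = \<tau> y"
    have ev: "e k \<in> D" for k using e by (auto simp: bij_betw_def)
    show "x = y"
    proof (cases "even x"; cases "even y")
      assume "even x" "even y" with eq show ?thesis
        using assms by (auto simp: \<tau>_def inj_eq)
    next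
      assume "even x" "odd y" with eq ev[of "y div 2"] show ?thesis by (auto simp: \<tau>_def D_def) (metis rangeI)+
    next
      assume "odd x" "even y" with eq ev[of "x div 2"] show ?thesis by (auto simp: \<tau>_def D_def)
    next
      assume "odd x" "odd y"
      with eq have "e (x div 2) = e (y div 2)" by (simp add: \<tau>_def)
      then have "x div 2 = y div 2" using e by (simp add: bij_betw_def inj_eq)
      with \<open>odd x\<close> \<open>odd y\<close> show ?thesis by presburger
    qed
  qed
  moreover have "surj \<tau>"
  proof -
    have "y \<in> range \<tau>" for y
    proof (cases "y \<in> range \<sigma>")
      case True then obtain k where "y = \<sigma> k" by auto
      then have "y = \<tau> (2*k)" by (simp add: \<tau>_def)
      then show ?thesis by auto
    next
      case False then have "y \<in> D" by (simp add: D_def)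
      moreover have "e ` UNIV = D" using e by (simp add: bij_betw_def)
      ultimately obtain k where "y = e k" by (metis imageE)
      then have "y = \<tau> (2*k+1)" by (simp add: \<tau>_def)
      then show ?thesis by auto
    qed
    then show ?thesis by auto
  qed
  moreover have "strict_mono (\<lambda>n::nat. 2*n)" (is "strict_mono ?r") by (simp add: strict_mono_def)
  moreover have "\<forall>n. \<tau> (?r n) = \<sigma> n" by (simp add: \<tau>_def)
  ultimately have "bij \<tau> \<and> strict_mono ?r \<and> (\<forall>n. \<tau> (?r n) = \<sigma> n)" by (simp add: bij_def)
  then show ?thesis by (intro exI[where x=\<tau>] exI[where x="?r"])
next
  case True
  define D where "D = UNIV - range \<sigma>"
  define k where "k = card D"
  obtain e where e: "bij_betw e {0..<k} D" using ex_bij_betw_nat_finite True by (auto simp: k_def D_def)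
  define \<tau> where "\<tau> n = (if n < k then e n else \<sigma> (n - k))" for n
  have ev: "n < k \<Longrightarrow> e n \<in> D" for n using e by (auto simp: bij_betw_def)
  have "inj \<tau>"
  proof (rule injI)
    fix x y assume eq: "\<tau> x = \<tau> y"
    show "x = y"
    proof (cases "x < k"; cases "y < k")
      assume "x < k" "y < k" with eq e show ?thesis by (auto simp: \<tau>_def bij_betw_def inj_on_def)
    next
      assume "x < k" "\<not> y < k" with eq ev[of x] show ?thesis by (auto simp: \<tau>_def D_def)
    next
      assume "\<not> x < k" "y < k" with eq ev[of y] show ?thesis by (auto simp: \<tau>_def D_def) (metis rangeI)+
    next
      assume "\<not> x < k" "\<not> y < k" with eq assms show ?thesis by (auto simp: \<tau>_def inj_eq)
    qed
  qed
  moreover have "surj \<tau>"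
  proof -
    have "y \<in> range \<tau>" for y
    proof (cases "y \<in> range \<sigma>")
      case True then obtain j where "y = \<sigma> j" by auto
      then have "y = \<tau> (j + k)" by (simp add: \<tau>_def)
      then show ?thesis by auto
    next
      case False then have "y \<in> D" by (simp add: D_def)
      moreover have "e ` {0..<k} = D" using e by (simp add: bij_betw_def)
      ultimately obtain j where "j < k" "y = e j" by (metis atLeastLessThan_iff imageE)
      then have "y = \<tau> j" by (simp add: \<tau>_def)
      then show ?thesis by auto
    qed
    then show ?thesis by auto
  qed
  moreover have "strict_mono (\<lambda>n::nat. n+k)" (is "strict_mono ?r") by (simp add: strict_mono_def)
  moreover have "\<forall>n. \<tau> (?r n) = \<sigma> n" by (simp add: \<tau>_def)
  ultimately have "bij \<tau> \<and> strict_mono ?r \<and> (\<forall>n. \<tau> (?r n) = \<sigma> n)" by (simp add: bij_def)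
  then show ?thesis by (intro exI[where x=\<tau>] exI[where x="?r"])
qed


lemma oprod_F:
  fixes f :: "nat \<Rightarrow> 'a::monoid_add"
  assumes comm: "\<And>x y::'a. x + y = y + x"
  shows "oprod f n = comm_monoid_set.F (+) 0 f {..<n}"
proof -
  interpret S: comm_monoid_set "(+)" "0::'a"
    by unfold_locales (auto simp: add.assoc comm)
  show ?thesis by (induction n) (auto simp: lessThan_Suc comm)
qed

lemma cauchy_lemma:
  fixes h :: "nat \<Rightarrow> 'a::{topological_group_add}"
  assumes comm: "\<And>x y::'a. x + y = y + x"
    and conv: "\<And>W. convergent (oprod (\<lambda>k. if k \<in> W then h k else 0))"
    and U: "open U" "0 \<in> U"
  shows "\<exists>N. \<forall>F. finite F \<and> F \<subseteq> {N..} \<longrightarrow> comm_monoid_set.F (+) 0 h F \<in> U"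
proof (rule ccontr)
  interpret S: comm_monoid_set "(+)" "0::'a"
    by unfold_locales (auto simp: add.assoc comm)
  assume "\<not> ?thesis"
  then have "\<forall>N. \<exists>F. finite F \<and> F \<subseteq> {N..} \<and> S.F h F \<notin> U" by blast
  then obtain Fs where Fs: "\<And>N. finite (Fs N)" "\<And>N. Fs N \<subseteq> {N..}" "\<And>N. S.F h (Fs N) \<notin> U"
    by metis
  have ne: "Fs N \<noteq> {}" for N using Fs(3)[of N] U by auto
  define Ns where "Ns = rec_nat 0 (\<lambda>_ N. Suc (Max (Fs N)))"
  have Ns0: "Ns 0 = 0" and NsS: "Ns (Suc i) = Suc (Max (Fs (Ns i)))" for i by (simp_all add: Ns_def)
  define B where "B i = Fs (Ns i)" for i
  have Bsub: "B i \<subseteq> {Ns i..<Ns (Suc i)}" for i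
  proof
    fix x assume "x \<in> B i"
    then show "x \<in> {Ns i..<Ns (Suc i)}"
      using Fs(1,2)[of "Ns i"] by (auto simp: B_def NsS le_imp_less_Suc)
  qed
  have "Ns i < Ns (Suc i)" for i
  proof -
    obtain x where "x \<in> B i" using ne by (auto simp: B_def)
    then show ?thesis using Bsub[of i] by auto
  qed
  then have mono: "strict_mono Ns" by (simp add: strict_mono_Suc_iff)
  define W where "W = (\<Union>i. B i)"
  define hW where "hW k = (if k \<in> W then h k else 0)" for k
  obtain L where L: "oprod hW \<longlonglongrightarrow> L" using conv[of W] unfolding convergent_def hW_def[abs_def] by blast
  have "(\<lambda>i. - oprod hW (Ns i) + oprod hW (Ns (Suc i))) \<longlonglongrightarrow> - L + L"
  proof (intro tendsto_add tendsto_minus)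
    show "(\<lambda>i. oprod hW (Ns i)) \<longlonglongrightarrow> L" using LIMSEQ_subseq_LIMSEQ[OF L mono] by (simp add: o_def)
    have "strict_mono (\<lambda>i. Ns (Suc i))" using mono by (simp add: strict_mono_def)
    then show "(\<lambda>i. oprod hW (Ns (Suc i))) \<longlonglongrightarrow> L" using LIMSEQ_subseq_LIMSEQ[OF L] by (simp add: o_def)
  qed
  then have lim0: "(\<lambda>i. - oprod hW (Ns i) + oprod hW (Ns (Suc i))) \<longlonglongrightarrow> 0" by simp
  have blk: "- oprod hW (Ns i) + oprod hW (Ns (Suc i)) = S.F h (B i)" for i
  proof -
    have le: "Ns i \<le> Ns (Suc i)" using mono by (simp add: strict_mono_less_eq)
    have "{..<Ns (Suc i)} = {..<Ns i} \<union> {Ns i..<Ns (Suc i)}" using le by auto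
    then have "oprod hW (Ns (Suc i)) = oprod hW (Ns i) + S.F hW {Ns i..<Ns (Suc i)}"
      by (simp add: oprod_F[OF comm] S.union_disjoint ivl_disj_int(2))
    then have "- oprod hW (Ns i) + oprod hW (Ns (Suc i)) = S.F hW {Ns i..<Ns (Suc i)}"
      by (simp add: add.assoc[symmetric])
    also have "\<dots> = S.F hW (B i)"
    proof (rule S.mono_neutral_right[symmetric, symmetric])
      show "finite {Ns i..<Ns (Suc i)}" by simp
      show "B i \<subseteq> {Ns i..<Ns (Suc i)}" by (rule Bsub)
      show "\<forall>k\<in>{Ns i..<Ns (Suc i)} - B i. hW k = 0"
      proof
        fix k assume k: "k \<in> {Ns i..<Ns (Suc i)} - B i"
        have "k \<notin> W"
        proof
          assume "k \<in> W" then obtain j where j: "k \<in> B j" by (auto simp: W_def)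
          with k have "j \<noteq> i" by auto
          have kj: "Ns j \<le> k" "k < Ns (Suc j)" using Bsub[of j] j by auto
          show False
          proof (cases "j < i")
            case True then have "Ns (Suc j) \<le> Ns i" using mono by (simp add: strict_mono_less_eq)
            with kj k show False by auto
          next
            case False with \<open>j \<noteq> i\<close> have "Suc i \<le> j" by simp
            then have "Ns (Suc i) \<le> Ns j" using mono by (simp add: strict_mono_less_eq)
            with kj k show False by auto
          qed
        qed
        then show "hW k = 0" by (simp add: hW_def)
      qed
    qed
    also have "\<dots> = S.F h (B i)" by (rule S.cong) (auto simp: hW_def W_def)
    finally show ?thesis .
  qed
  have "eventually (\<lambda>i. - oprod hW (Ns i) + oprod hW (Ns (Suc i)) \<in> U) sequentially"
    using lim0 U by (rule topological_tendstoD)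
  then obtain N where "\<forall>i\<ge>N. - oprod hW (Ns i) + oprod hW (Ns (Suc i)) \<in> U"
    by (auto simp: eventually_sequentially)
  then have "- oprod hW (Ns N) + oprod hW (Ns (Suc N)) \<in> U" by simp
  then show False using Fs(3)[of "Ns N"] blk[of N] by (simp add: B_def)
qed

lemma rearr_lemma:
  fixes h :: "nat \<Rightarrow> 'a::{topological_group_add}" and \<sigma> :: "nat \<Rightarrow> nat"
  assumes comm: "\<And>x y::'a. x + y = y + x"
    and inj: "inj \<sigma>"
    and hz: "\<And>j. j \<notin> range \<sigma> \<Longrightarrow> h j = 0"
    and lim: "oprod h \<longlonglongrightarrow> L"
    and cauchy: "\<And>U. open U \<Longrightarrow> 0 \<in> U \<Longrightarrow>
        \<exists>N. \<forall>F. finite F \<and> F \<subseteq> {N..} \<longrightarrow> comm_monoid_set.F (+) 0 h F \<in> U"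
  shows "oprod (h \<circ> \<sigma>) \<longlonglongrightarrow> L"
proof -
  interpret S: comm_monoid_set "(+)" "0::'a"
    by unfold_locales (auto simp: add.assoc comm)
  define n where "n K = (LEAST j. j \<in> range \<sigma> \<and> j \<notin> \<sigma> ` {..<K})" for K
  have ex: "\<exists>j. j \<in> range \<sigma> \<and> j \<notin> \<sigma> ` {..<K}" for K
    using inj by (intro exI[of _ "\<sigma> K"]) (auto simp: inj_eq)
  have n1: "n K \<in> range \<sigma>" "n K \<notin> \<sigma> ` {..<K}" for K
    using LeastI_ex[OF ex[of K]] by (simp_all add: n_def)
  have n2: "j \<in> \<sigma> ` {..<K}" if "j < n K" "j \<in> range \<sigma>" for j K
    using not_less_Least[of j "\<lambda>j. j \<in> range \<sigma> \<and> j \<notin> \<sigma> ` {..<K}"] that by (auto simp: n_def)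
  have nlim: "\<forall>\<^sub>F K in sequentially. Z \<le> n K" for Z
  proof -
    have "finite {k. \<sigma> k < Z}"
      using finite_vimageI[OF finite_lessThan[of Z] inj] by (simp add: vimage_def)
    then obtain K0 where K0: "\<And>k. \<sigma> k < Z \<Longrightarrow> k < K0"
      using finite_nat_bounded by blast
    have "Z \<le> n K" if "K0 \<le> K" for K
    proof (rule ccontr)
      assume "\<not> Z \<le> n K"
      obtain k where k: "n K = \<sigma> k" using n1(1)[of K] by auto
      with \<open>\<not> Z \<le> n K\<close> have "k < K" using K0[of k] that by simp
      then have "n K \<in> \<sigma> ` {..<K}" using k by auto
      with n1(2) show False by blast
    qed
    then show ?thesis by (auto simp: eventually_sequentially)
  qed
  define R where "R K = S.F h (\<sigma> ` {..<K} - {..<n K})" for K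
  have decomp: "oprod (h \<circ> \<sigma>) K = oprod h (n K) + R K" for K
  proof -
    have "oprod (h \<circ> \<sigma>) K = S.F (h \<circ> \<sigma>) {..<K}" by (rule oprod_F[OF comm])
    also have "\<dots> = S.F h (\<sigma> ` {..<K})" using S.reindex[of \<sigma> "{..<K}" h] inj_on_subset[OF inj, of "{..<K}"] by simp
    also have "\<dots> = S.F h (\<sigma> ` {..<K} \<inter> {..<n K}) + R K"
      unfolding R_def by (rule S.Int_Diff) simp
    also have "S.F h (\<sigma> ` {..<K} \<inter> {..<n K}) = S.F h {..<n K}"
    proof (rule S.mono_neutral_left)
      show "\<forall>i\<in>{..<n K} - \<sigma> ` {..<K} \<inter> {..<n K}. h i = 0"
      proof
        fix i assume i: "i \<in> {..<n K} - \<sigma> ` {..<K} \<inter> {..<n K}"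
        then have "i < n K" "i \<notin> \<sigma> ` {..<K}" by auto
        then have "i \<notin> range \<sigma>" using n2[of i K] by auto
        then show "h i = 0" by (rule hz)
      qed
    qed auto
    also have "\<dots> = oprod h (n K)" by (rule oprod_F[OF comm, symmetric])
    finally show ?thesis .
  qed
  have R0: "R \<longlonglongrightarrow> 0"
  proof (rule topological_tendstoI)
    fix U :: "'a set" assume U: "open U" "0 \<in> U"
    from cauchy[OF U] obtain N where N0: "\<forall>F. finite F \<and> F \<subseteq> {N..} \<longrightarrow> S.F h F \<in> U" ..
    have N: "S.F h F \<in> U" if "finite F" "F \<subseteq> {N..}" for F using N0 that by blast
    show "\<forall>\<^sub>F K in sequentially. R K \<in> U"
      using nlim[of N]
    proof (rule eventually_mono)
      fix K assume "N \<le> n K"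
      then show "R K \<in> U" unfolding R_def by (intro N) auto
    qed
  qed
  have "filterlim n sequentially sequentially"
    using nlim by (simp add: filterlim_at_top)
  then have "(\<lambda>K. oprod h (n K)) \<longlonglongrightarrow> L"
    using lim by (rule filterlim_compose[rotated])
  then have "(\<lambda>K. oprod h (n K) + R K) \<longlonglongrightarrow> L + 0"
    using R0 by (rule tendsto_add)
  then show ?thesis by (simp add: decomp[abs_def] del: comp_apply)
qed

lemma ap4_to_ap2:
  fixes g :: "nat \<Rightarrow> 'a::{topological_group_add, t2_space}"
  assumes comm: "\<And>x y::'a. x + y = y + x"
    and hm: "hyper_multipliable g" and inj: "inj \<sigma>"
  shows "hyper_multipliable (g \<circ> \<sigma>)"
  unfolding hyper_multipliable_def
proof
  fix m :: "nat \<Rightarrow> int"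
  define m' where "m' j = (if j \<in> range \<sigma> then m (inv \<sigma> j) else 0)" for j
  define h where "h j = zmult (m' j) (g j)" for j
  have hW: "convergent (oprod (\<lambda>k. if k \<in> W then h k else 0))" for W
  proof -
    have "(\<lambda>k. if k \<in> W then h k else 0) = (\<lambda>k. zmult (if k \<in> W then m' k else 0) (g k))"
      by (auto simp: h_def)
    then show ?thesis using hm by (simp add: hyper_multipliable_def)
  qed
  obtain L where L: "oprod h \<longlonglongrightarrow> L"
    using hm unfolding hyper_multipliable_def convergent_def h_def[abs_def] by blast
  have "oprod (h \<circ> \<sigma>) \<longlonglongrightarrow> L"
  proof (rule rearr_lemma[OF comm inj _ L])
    show "h j = 0" if "j \<notin> range \<sigma>" for j using that by (simp add: h_def m'_def)
    show "\<exists>N. \<forall>F. finite F \<and> F \<subseteq> {N..} \<longrightarrow> comm_monoid_set.F (+) 0 h F \<in> U"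
      if "open U" "0 \<in> U" for U
      using cauchy_lemma[OF comm hW that] .
  qed
  moreover have "h \<circ> \<sigma> = (\<lambda>k. zmult (m k) ((g \<circ> \<sigma>) k))"
    using inj by (auto simp: h_def m'_def fun_eq_iff)
  ultimately show "convergent (oprod (\<lambda>k. zmult (m k) ((g \<circ> \<sigma>) k)))"
    by (auto simp: convergent_def)
qed

theorem lemma3p2:
  fixes g :: "nat \<Rightarrow> 'a::{topological_group_add, t2_space}"
    and A :: "'a set"
  assumes inj_g: "inj g"
    and A_def: "A = range g"
  defines "ap1 \<equiv> absolutely_productive A"
    and "ap2 \<equiv> (\<forall>\<sigma> :: nat \<Rightarrow> nat. inj \<sigma> \<longrightarrow> hyper_multipliable (g \<circ> \<sigma>))"
    and "ap3 \<equiv> (\<forall>\<sigma> :: nat \<Rightarrow> nat. bij \<sigma> \<longrightarrow> hyper_multipliable (g \<circ> \<sigma>))"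
    and "ap4 \<equiv> hyper_multipliable g"
  shows "((ap1 \<longleftrightarrow> ap2) \<and> (ap2 \<longleftrightarrow> ap3) \<and> (ap1 \<longrightarrow> ap4))
         \<and> ((\<forall>x y :: 'a. x + y = y + x) \<longrightarrow> (ap1 \<longleftrightarrow> ap4))"
proof -
  have 12: "ap1 \<longleftrightarrow> ap2"
  proof
    assume ap1
    show ap2 unfolding ap2_def
    proof (intro allI impI)
      fix \<sigma> :: "nat \<Rightarrow> nat" assume "inj \<sigma>"
      then have "inj (g \<circ> \<sigma>)" using inj_g by (simp add: inj_compose)
      moreover have "range (g \<circ> \<sigma>) \<subseteq> A" by (auto simp: A_def)
      ultimately show "hyper_multipliable (g \<circ> \<sigma>)"
        using \<open>ap1\<close> by (simp add: ap1_def absolutely_productive_def)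
    qed
  next
    assume ap2
    show ap1 unfolding ap1_def absolutely_productive_def
    proof (intro allI impI)
      fix h :: "nat \<Rightarrow> 'a" assume h: "inj h \<and> range h \<subseteq> A"
      define \<sigma> where "\<sigma> = inv g \<circ> h"
      have gs: "g \<circ> \<sigma> = h"
      proof
        fix n have "h n \<in> range g" using h by (auto simp: A_def)
        then show "(g \<circ> \<sigma>) n = h n" by (simp add: \<sigma>_def f_inv_into_f)
      qed
      have "inj \<sigma>"
      proof (rule injI)
        fix x y assume "\<sigma> x = \<sigma> y"
        then have "(g \<circ> \<sigma>) x = (g \<circ> \<sigma>) y" by simp
        then have "h x = h y" using gs by simp
        then show "x = y" using h by (simp add: inj_eq)
      qed
      then show "hyper_multipliable h" using \<open>ap2\<close> gs by (metis ap2_def)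
    qed
  qed
  have 23: "ap2 \<longleftrightarrow> ap3"
  proof
    assume ap2 then show ap3 by (auto simp: ap2_def ap3_def bij_def)
  next
    assume ap3
    show ap2 unfolding ap2_def
    proof (intro allI impI)
      fix \<sigma> :: "nat \<Rightarrow> nat" assume "inj \<sigma>"
      then obtain \<tau> and r :: "nat \<Rightarrow> nat" where t: "bij \<tau>" "strict_mono r" "\<And>n. \<tau> (r n) = \<sigma> n"
        using ext_bij by blast
      have hmt: "hyper_multipliable (g \<circ> \<tau>)" using \<open>ap3\<close> t(1) by (simp add: ap3_def)
      show "hyper_multipliable (g \<circ> \<sigma>)" unfolding hyper_multipliable_def
      proof
        fix m :: "nat \<Rightarrow> int"
        define m' where "m' j = (if j \<in> range r then m (inv r j) else 0)" for j
        have inj_r: "inj r" using t(2) by (rule strict_mono_imp_inj_on)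
        show "convergent (oprod (\<lambda>k. zmult (m k) ((g \<circ> \<sigma>) k)))"
        proof (rule conv_sub[OF t(2)])
          show "convergent (oprod (\<lambda>k. zmult (m' k) ((g \<circ> \<tau>) k)))"
            using hmt by (simp add: hyper_multipliable_def)
          show "zmult (m' (r n)) ((g \<circ> \<tau>) (r n)) = zmult (m n) ((g \<circ> \<sigma>) n)" for n
            using inj_r t(3) by (simp add: m'_def)
          show "zmult (m' j) ((g \<circ> \<tau>) j) = 0" if "j \<notin> range r" for j
            using that by (simp add: m'_def)
        qed
      qed
    qed
  qed
  have 14: "ap1 \<longrightarrow> ap4"
  proof
    assume ap1 then have ap2 using 12 by simp
    then have "inj (id::nat\<Rightarrow>nat) \<longrightarrow> hyper_multipliable (g \<circ> id)" unfolding ap2_def by (rule allE)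
    then have "hyper_multipliable (g \<circ> id)" by simp
    then show ap4 by (simp add: ap4_def)
  qed
  have b: "ap1 \<longleftrightarrow> ap4" if comm: "\<forall>x y :: 'a. x + y = y + x"
  proof
    assume ap4
    have ap2 unfolding ap2_def
    proof (intro allI impI)
      fix \<sigma> :: "nat \<Rightarrow> nat" assume "inj \<sigma>"
      show "hyper_multipliable (g \<circ> \<sigma>)"
      proof (rule ap4_to_ap2)
        show "x + y = y + x" for x y :: 'a using comm by blast
        show "hyper_multipliable g" using \<open>ap4\<close> by (simp add: ap4_def)
      qed fact
    qed
    then show ap1 using 12 by simp
  qed (use 14 in simp)
  show ?thesis using 12 23 14 b by blast
qed

end
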